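(* Let $\mathcal{C}$ be a category with pushouts and pullbacks, equipped with a costable factorisation system $(\mathcal{E},\mathcal{M})$. Let $\mathcal{A}$ be a subcategory of $\mathcal{C}$ containing all isomorphisms and stable under pullback. Suppose that for every cospan $X\xrightarrow{f}A\xleftarrow{g}Y$ in $\mathcal{A}$, with pullback span $X\leftarrow P\rightarrow Y$ (in $\mathcal{C}$) and pushout $X\to Q\leftarrow Y$ of that span (in $\mathcal{C}$), the unique induced morphism $Q\to A$ lies in $\mathcal{M}$. Then mapping a span $X\xleftarrow{f}N\xrightarrow{g}Y$ with $f,g\in\mathcal{A}$ to the corelation represented by its pushout cospan in $\mathcal{C}$ defines an identity-on-objects functor $\Pi\colon \mathrm{Span}(\mathcal{A}) \to \mathrm{Corel}(\mathcal{C})$.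
   Context: Composition is written diagrammatically ($f;g$ means first $f$, then $g$). A factorisation system $(\mathcal{E},\mathcal{M})$ on $\mathcal{C}$: subcategories containing all isomorphisms such that every morphism factors as $e;m$ with $e\in\mathcal{E}$, $m\in\mathcal{M}$, with the unique diagonal fill-in property (given $f=e;m$, $f'=e';m'$ and $u,v$ with $f;v=u;f'$, there is a unique $s$ with $e;s=u;e'$, $m;v=s;m'$). Costable: $\mathcal{M}$ is stable under pushout (in a pushout square, if a morphism out of the apex is in $\mathcal{M}$, so is the opposite side). $\mathcal{A}$ stable under pullback: in a pullback square in $\mathcal{C}$, if a morphism into the corner lies in $\mathcal{A}$ then so does the opposite side. $\mathrm{Span}(\mathcal{C})$ has the objects of $\mathcal{C}$ and morphisms isomorphism classes of spans, composed by pullback; $\mathrm{Span}(\mathcal{A})$ is its subcategory of spans both of whose legs lie in $\mathcal{A}$. $\mathrm{Corel}(\mathcal{C})$ has the objects of $\mathcal{C}$ and morphisms $X\to Y$ the equivalence classes of cospans $X\xrightarrow{f}N\xleftarrow{g}Y$ under the equivalence relation generated by relating it to $X\xrightarrow{f'}N'\xleftarrow{g'}Y$ whenever there is $m\colon N\to N'$ in $\mathcal{M}$ with $f;m=f'$, $g;m=g'$; composition by pushout of representatives. *)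

theory Defs
  imports Main
begin

text \<open>A (small, set-based) category. Composition is written diagrammatically:
  Comp C f g means first f, then g, defined when Cod f = Dom g.\<close>

record ('o, 'a) cat =
  Obj  :: "'o set"
  Arr  :: "'a set"
  Dom  :: "'a \<Rightarrow> 'o"
  Cod  :: "'a \<Rightarrow> 'o"
  Id   :: "'o \<Rightarrow> 'a"
  Comp :: "'a \<Rightarrow> 'a \<Rightarrow> 'a"

definition hom :: "('o, 'a) cat \<Rightarrow> 'o \<Rightarrow> 'o \<Rightarrow> 'a \<Rightarrow> bool" where
  "hom C X Y f \<longleftrightarrow> f \<in> Arr C \<and> Dom C f = X \<and> Cod C f = Y"

definition category :: "('o, 'a) cat \<Rightarrow> bool" where
  "category C \<longleftrightarrow>
     (\<forall>f \<in> Arr C. Dom C f \<in> Obj C \<and> Cod C f \<in> Obj C) \<and>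
     (\<forall>X \<in> Obj C. hom C X X (Id C X)) \<and>
     (\<forall>f \<in> Arr C. \<forall>g \<in> Arr C. Cod C f = Dom C g \<longrightarrow>
         hom C (Dom C f) (Cod C g) (Comp C f g)) \<and>
     (\<forall>f \<in> Arr C. Comp C (Id C (Dom C f)) f = f \<and> Comp C f (Id C (Cod C f)) = f) \<and>
     (\<forall>f \<in> Arr C. \<forall>g \<in> Arr C. \<forall>h \<in> Arr C. Cod C f = Dom C g \<longrightarrow> Cod C g = Dom C h \<longrightarrow>
         Comp C (Comp C f g) h = Comp C f (Comp C g h))"

definition iso :: "('o, 'a) cat \<Rightarrow> 'a \<Rightarrow> bool" where
  "iso C u \<longleftrightarrow> u \<in> Arr C \<and> (\<exists>v. hom C (Cod C u) (Dom C u) v \<and>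
      Comp C u v = Id C (Dom C u) \<and> Comp C v u = Id C (Cod C u))"

definition subcat_with_isos :: "('o, 'a) cat \<Rightarrow> 'a set \<Rightarrow> bool" where
  "subcat_with_isos C S \<longleftrightarrow> S \<subseteq> Arr C \<and>
     (\<forall>u. iso C u \<longrightarrow> u \<in> S) \<and>
     (\<forall>f \<in> S. \<forall>g \<in> S. Cod C f = Dom C g \<longrightarrow> Comp C f g \<in> S)"

definition is_pullback :: "('o, 'a) cat \<Rightarrow> 'a \<Rightarrow> 'a \<Rightarrow> 'a \<Rightarrow> 'a \<Rightarrow> bool" where
  "is_pullback C f g p q \<longleftrightarrow>
     f \<in> Arr C \<and> g \<in> Arr C \<and> Cod C f = Cod C g \<and>
     hom C (Dom C p) (Dom C f) p \<and> hom C (Dom C p) (Dom C g) q \<and>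
     Comp C p f = Comp C q g \<and>
     (\<forall>p' q'. hom C (Dom C p') (Dom C f) p' \<and> hom C (Dom C p') (Dom C g) q' \<and>
        Comp C p' f = Comp C q' g \<longrightarrow>
        (\<exists>!h. hom C (Dom C p') (Dom C p) h \<and> Comp C h p = p' \<and> Comp C h q = q'))"

definition is_pushout :: "('o, 'a) cat \<Rightarrow> 'a \<Rightarrow> 'a \<Rightarrow> 'a \<Rightarrow> 'a \<Rightarrow> bool" where
  "is_pushout C f g i j \<longleftrightarrow>
     f \<in> Arr C \<and> g \<in> Arr C \<and> Dom C f = Dom C g \<and>
     hom C (Cod C f) (Cod C i) i \<and> hom C (Cod C g) (Cod C i) j \<and>
     Comp C f i = Comp C g j \<and>
     (\<forall>i' j'. hom C (Cod C f) (Cod C i') i' \<and> hom C (Cod C g) (Cod C i') j' \<and>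
        Comp C f i' = Comp C g j' \<longrightarrow>
        (\<exists>!h. hom C (Cod C i) (Cod C i') h \<and> Comp C i h = i' \<and> Comp C j h = j'))"

definition has_pullbacks :: "('o, 'a) cat \<Rightarrow> bool" where
  "has_pullbacks C \<longleftrightarrow> (\<forall>f \<in> Arr C. \<forall>g \<in> Arr C. Cod C f = Cod C g \<longrightarrow>
      (\<exists>p q. is_pullback C f g p q))"

definition has_pushouts :: "('o, 'a) cat \<Rightarrow> bool" where
  "has_pushouts C \<longleftrightarrow> (\<forall>f \<in> Arr C. \<forall>g \<in> Arr C. Dom C f = Dom C g \<longrightarrow>
      (\<exists>i j. is_pushout C f g i j))"

definition factorisation_system :: "('o, 'a) cat \<Rightarrow> 'a set \<Rightarrow> 'a set \<Rightarrow> bool" where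
  "factorisation_system C E M \<longleftrightarrow>
     subcat_with_isos C E \<and> subcat_with_isos C M \<and>
     (\<forall>f \<in> Arr C. \<exists>e m. e \<in> E \<and> m \<in> M \<and> Cod C e = Dom C m \<and> f = Comp C e m) \<and>
     (\<forall>e m e' m' u v.
        e \<in> E \<and> m \<in> M \<and> e' \<in> E \<and> m' \<in> M \<and>
        Cod C e = Dom C m \<and> Cod C e' = Dom C m' \<and>
        hom C (Dom C e) (Dom C e') u \<and> hom C (Cod C m) (Cod C m') v \<and>
        Comp C (Comp C e m) v = Comp C u (Comp C e' m') \<longrightarrow>
        (\<exists>!s. hom C (Cod C e) (Cod C e') s \<and>
              Comp C e s = Comp C u e' \<and> Comp C m v = Comp C s m'))"

definition costable :: "('o, 'a) cat \<Rightarrow> 'a set \<Rightarrow> bool" where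
  "costable C M \<longleftrightarrow> (\<forall>f g i j. is_pushout C f g i j \<longrightarrow>
      (f \<in> M \<longrightarrow> j \<in> M) \<and> (g \<in> M \<longrightarrow> i \<in> M))"

definition pullback_stable :: "('o, 'a) cat \<Rightarrow> 'a set \<Rightarrow> bool" where
  "pullback_stable C A \<longleftrightarrow> (\<forall>f g p q. is_pullback C f g p q \<longrightarrow>
      (f \<in> A \<longrightarrow> q \<in> A) \<and> (g \<in> A \<longrightarrow> p \<in> A))"

definition span_in :: "('o, 'a) cat \<Rightarrow> 'a set \<Rightarrow> 'a \<Rightarrow> 'a \<Rightarrow> bool" where
  "span_in C A f g \<longleftrightarrow> f \<in> A \<and> g \<in> A \<and> f \<in> Arr C \<and> g \<in> Arr C \<and> Dom C f = Dom C g"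

text \<open>Isomorphism of spans (the morphisms of Span are isomorphism classes of spans).\<close>
definition span_iso :: "('o, 'a) cat \<Rightarrow> 'a \<times> 'a \<Rightarrow> 'a \<times> 'a \<Rightarrow> bool" where
  "span_iso C s s' \<longleftrightarrow> (case s of (f, g) \<Rightarrow> case s' of (f', g') \<Rightarrow>
      f \<in> Arr C \<and> g \<in> Arr C \<and> Dom C f = Dom C g \<and>
      f' \<in> Arr C \<and> g' \<in> Arr C \<and> Dom C f' = Dom C g' \<and>
      (\<exists>u. iso C u \<and> hom C (Dom C f) (Dom C f') u \<and> Comp C u f' = f \<and> Comp C u g' = g))"

definition corel_step :: "('o, 'a) cat \<Rightarrow> 'a set \<Rightarrow> 'a \<times> 'a \<Rightarrow> 'a \<times> 'a \<Rightarrow> bool" where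
  "corel_step C M c c' \<longleftrightarrow> (case c of (f, g) \<Rightarrow> case c' of (f', g') \<Rightarrow>
      f \<in> Arr C \<and> g \<in> Arr C \<and> Cod C f = Cod C g \<and>
      (\<exists>m. m \<in> M \<and> hom C (Cod C f) (Cod C f') m \<and> Comp C f m = f' \<and> Comp C g m = g'))"

definition corel_eq :: "('o, 'a) cat \<Rightarrow> 'a set \<Rightarrow> 'a \<times> 'a \<Rightarrow> 'a \<times> 'a \<Rightarrow> bool" where
  "corel_eq C M = (\<lambda>c c'. corel_step C M c c' \<or> corel_step C M c' c)\<^sup>*\<^sup>*"

end

theory Submission
  imports Defs
begin


lemma comp_hom: "category C \<Longrightarrow> hom C X Y f \<Longrightarrow> hom C Y Z g \<Longrightarrow> hom C X Z (Comp C f g)"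
  unfolding category_def hom_def by (elim conjE) force
lemma assoc: "category C \<Longrightarrow> hom C X Y f \<Longrightarrow> hom C Y Z g \<Longrightarrow> hom C Z W h \<Longrightarrow>
  Comp C (Comp C f g) h = Comp C f (Comp C g h)"
  unfolding category_def hom_def by (elim conjE) force
lemma id_hom: "category C \<Longrightarrow> X \<in> Obj C \<Longrightarrow> hom C X X (Id C X)"
  unfolding category_def by (elim conjE) force
lemma id_l: "category C \<Longrightarrow> hom C X Y f \<Longrightarrow> Comp C (Id C X) f = f"
  unfolding category_def hom_def by (elim conjE) force
lemma id_r: "category C \<Longrightarrow> hom C X Y f \<Longrightarrow> Comp C f (Id C Y) = f"
  unfolding category_def hom_def by (elim conjE) force
lemma hom_obj: "category C \<Longrightarrow> hom C X Y f \<Longrightarrow> X \<in> Obj C \<and> Y \<in> Obj C"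
  unfolding category_def hom_def by (elim conjE) force

lemma po_D: "is_pushout C f g i j \<Longrightarrow> hom C (Dom C f) (Cod C f) f \<and> hom C (Dom C f) (Cod C g) g
  \<and> hom C (Cod C f) (Cod C i) i \<and> hom C (Cod C g) (Cod C i) j \<and> Comp C f i = Comp C g j"
proof -
  assume "is_pushout C f g i j"
  hence "f \<in> Arr C \<and> g \<in> Arr C \<and> Dom C f = Dom C g \<and>
     hom C (Cod C f) (Cod C i) i \<and> hom C (Cod C g) (Cod C i) j \<and> Comp C f i = Comp C g j"
    unfolding is_pushout_def by (elim conjE) (intro conjI; assumption)
  thus ?thesis by (simp add: hom_def)
qed
lemma po_U: assumes P: "is_pushout C f g i j" and hx: "hom C (Cod C f) T x" and hy: "hom C (Cod C g) T y"
  and e: "Comp C f x = Comp C g y"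
  shows "\<exists>!h. hom C (Cod C i) T h \<and> Comp C i h = x \<and> Comp C j h = y"
proof -
  have U: "\<forall>i' j'. hom C (Cod C f) (Cod C i') i' \<and> hom C (Cod C g) (Cod C i') j' \<and>
        Comp C f i' = Comp C g j' \<longrightarrow>
        (\<exists>!h. hom C (Cod C i) (Cod C i') h \<and> Comp C i h = i' \<and> Comp C j h = j')"
    using P unfolding is_pushout_def by (elim conjE) assumption
  have cx: "Cod C x = T" using hx by (simp add: hom_def)
  have "hom C (Cod C f) (Cod C x) x \<and> hom C (Cod C g) (Cod C x) y \<and> Comp C f x = Comp C g y"
    using hx hy e cx by simp
  hence "\<exists>!h. hom C (Cod C i) (Cod C x) h \<and> Comp C i h = x \<and> Comp C j h = y"
    using U by blast
  thus ?thesis using cx by simp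
qed
lemma po_ex: "is_pushout C f g i j \<Longrightarrow> hom C (Cod C f) T x \<Longrightarrow> hom C (Cod C g) T y \<Longrightarrow>
  Comp C f x = Comp C g y \<Longrightarrow> \<exists>h. hom C (Cod C i) T h \<and> Comp C i h = x \<and> Comp C j h = y"
  by (drule po_U) (auto dest: ex1_implies_ex)
lemma po_uniq: assumes c: "category C" and P: "is_pushout C f g i j"
  and h1: "hom C (Cod C i) T h1" and h2: "hom C (Cod C i) T h2"
  and e1: "Comp C i h1 = Comp C i h2" and e2: "Comp C j h1 = Comp C j h2"
  shows "h1 = h2"
proof -
  note D = po_D[OF P]
  have hi: "hom C (Cod C f) (Cod C i) i" and hj: "hom C (Cod C g) (Cod C i) j"
    and hf: "hom C (Dom C f) (Cod C f) f" and hg: "hom C (Dom C f) (Cod C g) g"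
    and e: "Comp C f i = Comp C g j" using D by simp_all
  have a: "hom C (Cod C f) T (Comp C i h1)" "hom C (Cod C g) T (Comp C j h1)"
    using comp_hom[OF c hi h1] comp_hom[OF c hj h1] by simp_all
  have b: "Comp C f (Comp C i h1) = Comp C g (Comp C j h1)"
    using assoc[OF c hf hi h1] assoc[OF c hg hj h1] e by simp
  have "\<exists>!h. hom C (Cod C i) T h \<and> Comp C i h = Comp C i h1 \<and> Comp C j h = Comp C j h1"
    by (rule po_U[OF P a b])
  moreover have "hom C (Cod C i) T h1 \<and> Comp C i h1 = Comp C i h1 \<and> Comp C j h1 = Comp C j h1" using h1 by simp
  moreover have "hom C (Cod C i) T h2 \<and> Comp C i h2 = Comp C i h1 \<and> Comp C j h2 = Comp C j h1" using h2 e1 e2 by simp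
  ultimately show ?thesis by blast
qed
lemma pb_D: "is_pullback C f g p q \<Longrightarrow> hom C (Dom C f) (Cod C f) f \<and> hom C (Dom C g) (Cod C f) g
  \<and> hom C (Dom C p) (Dom C f) p \<and> hom C (Dom C p) (Dom C g) q \<and> Comp C p f = Comp C q g"
proof -
  assume "is_pullback C f g p q"
  hence "f \<in> Arr C \<and> g \<in> Arr C \<and> Cod C f = Cod C g \<and>
     hom C (Dom C p) (Dom C f) p \<and> hom C (Dom C p) (Dom C g) q \<and> Comp C p f = Comp C q g"
    unfolding is_pullback_def by (elim conjE) (intro conjI; assumption)
  thus ?thesis by (simp add: hom_def)
qed


lemma po_intro:
  assumes "t \<in> Arr C" "u \<in> Arr C" "Dom C t = Dom C u" "hom C (Cod C t) (Cod C m) m"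
    "hom C (Cod C u) (Cod C m) y" "Comp C t m = Comp C u y"
    "\<And>x z T. hom C (Cod C t) T x \<Longrightarrow> hom C (Cod C u) T z \<Longrightarrow> Comp C t x = Comp C u z \<Longrightarrow>
       \<exists>!n. hom C (Cod C m) T n \<and> Comp C m n = x \<and> Comp C y n = z"
  shows "is_pushout C t u m y"
  unfolding is_pushout_def
proof (intro conjI allI impI)
  fix i' j' assume a: "hom C (Cod C t) (Cod C i') i' \<and> hom C (Cod C u) (Cod C i') j' \<and> Comp C t i' = Comp C u j'"
  show "\<exists>!h. hom C (Cod C m) (Cod C i') h \<and> Comp C m h = i' \<and> Comp C y h = j'"
    using assms(7)[where x=i' and z=j' and T="Cod C i'"] a by blast
qed (use assms in auto)

lemma corel_eq_step: "corel_step C M c c' \<Longrightarrow> corel_eq C M c c'"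
  unfolding corel_eq_def by (rule r_into_rtranclp) simp
lemma iso_intro: assumes "hom C X Y h" "hom C Y X k" "Comp C h k = Id C X" "Comp C k h = Id C Y"
  shows "iso C h"
proof -
  have d: "h \<in> Arr C" "Dom C h = X" "Cod C h = Y" using assms(1) unfolding hom_def by blast+
  show ?thesis unfolding iso_def
  proof (intro conjI exI[of _ k])
    show "h \<in> Arr C" by (rule d(1))
    show "hom C (Cod C h) (Dom C h) k" using assms(2) d by simp
    show "Comp C h k = Id C (Dom C h)" using assms(3) d by simp
    show "Comp C k h = Id C (Cod C h)" using assms(4) d by simp
  qed
qed

lemma part1:
  assumes cat: "category C" and fs: "factorisation_system C E M"
    and sf: "span_in C A f g" and sf': "span_in C A f' g'" and si: "span_iso C (f, g) (f', g')"
    and po1: "is_pushout C f g i j" and po2: "is_pushout C f' g' i' j'"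
  shows "corel_eq C M (i, j) (i', j')"
proof -
  obtain u where u: "iso C u" "hom C (Dom C f) (Dom C f') u" "Comp C u f' = f" "Comp C u g' = g"
    using si unfolding span_iso_def by auto
  obtain v where v: "hom C (Cod C u) (Dom C u) v" "Comp C u v = Id C (Dom C u)" "Comp C v u = Id C (Cod C u)"
    using u(1) unfolding iso_def by auto
  have du: "Dom C u = Dom C f" "Cod C u = Dom C f'" using u(2) by (simp_all add: hom_def)
  note D1 = po_D[OF po1] and D2 = po_D[OF po2]
  have gdom: "Dom C g = Dom C f" "Dom C g' = Dom C f'" using sf sf' unfolding span_in_def by simp_all
  have hf: "hom C (Dom C f) (Cod C f) f" and hf': "hom C (Dom C f') (Cod C f') f'"
    and hg: "hom C (Dom C f) (Cod C g) g" and hg': "hom C (Dom C f') (Cod C g') g'"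
    using D1 D2 by auto
  have "hom C (Dom C f) (Cod C f') f" using comp_hom[OF cat u(2) hf'] u(3) by simp
  hence cf: "Cod C f = Cod C f'" by (simp add: hom_def)
  have "hom C (Dom C f) (Cod C g') g" using comp_hom[OF cat u(2) hg'] u(4) gdom by simp
  hence cg: "Cod C g = Cod C g'" by (simp add: hom_def)
  have hv: "hom C (Dom C f') (Dom C f) v" using v(1) du by simp
  have vu: "Comp C v u = Id C (Dom C f')" "Comp C u v = Id C (Dom C f)" using v du by simp_all
  have ff: "Comp C v f = f'"
  proof -
    have "Comp C v f = Comp C v (Comp C u f')" using u(3) by simp
    also have "\<dots> = Comp C (Comp C v u) f'" using assoc[OF cat hv u(2) hf'] by simp
    also have "\<dots> = f'" using vu id_l[OF cat hf'] by simp
    finally show ?thesis .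
  qed
  have gg: "Comp C v g = g'"
  proof -
    have "Comp C v g = Comp C v (Comp C u g')" using u(4) by simp
    also have "\<dots> = Comp C (Comp C v u) g'" using assoc[OF cat hv u(2) hg'] by simp
    also have "\<dots> = g'" using vu id_l[OF cat hg'] by simp
    finally show ?thesis .
  qed
  have hi: "hom C (Cod C f) (Cod C i) i" and hj: "hom C (Cod C g) (Cod C i) j"
    and hi': "hom C (Cod C f) (Cod C i') i'" and hj': "hom C (Cod C g) (Cod C i') j'"
    using D1 D2 cf cg by auto
  have e1: "Comp C f i' = Comp C g j'"
  proof -
    have "Comp C f i' = Comp C u (Comp C f' i')" using assoc[OF cat u(2) hf' hi'[unfolded cf]] u(3) by simp
    also have "\<dots> = Comp C u (Comp C g' j')" using D2 by simp
    also have "\<dots> = Comp C g j'" using assoc[OF cat u(2) hg' hj'[unfolded cg]] u(4) by simp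
    finally show ?thesis .
  qed
  obtain h where h: "hom C (Cod C i) (Cod C i') h" "Comp C i h = i'" "Comp C j h = j'"
    using po_ex[OF po1 hi' hj' e1] by auto
  have e2: "Comp C f' i = Comp C g' j"
  proof -
    have "Comp C f' i = Comp C v (Comp C f i)" using assoc[OF cat hv hf hi] ff by simp
    also have "\<dots> = Comp C v (Comp C g j)" using D1 by simp
    also have "\<dots> = Comp C g' j" using assoc[OF cat hv hg hj] gg by simp
    finally show ?thesis .
  qed
  obtain k where k: "hom C (Cod C i') (Cod C i) k" "Comp C i' k = i" "Comp C j' k = j"
    using po_ex[OF po2, of "Cod C i" i j] hi hj cf cg e2 by auto
  have oi: "Cod C i \<in> Obj C" "Cod C i' \<in> Obj C" using hom_obj[OF cat hi] hom_obj[OF cat hi'] by auto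
  have hk: "Comp C h k = Id C (Cod C i)"
  proof (rule po_uniq[OF cat po1])
    show "hom C (Cod C i) (Cod C i) (Comp C h k)" using comp_hom[OF cat h(1) k(1)] .
    show "hom C (Cod C i) (Cod C i) (Id C (Cod C i))" using id_hom[OF cat oi(1)] .
    show "Comp C i (Comp C h k) = Comp C i (Id C (Cod C i))"
      using assoc[OF cat hi h(1) k(1)] h k id_r[OF cat hi] by simp
    show "Comp C j (Comp C h k) = Comp C j (Id C (Cod C i))"
      using assoc[OF cat hj h(1) k(1)] h k id_r[OF cat hj] by simp
  qed
  have kh: "Comp C k h = Id C (Cod C i')"
  proof (rule po_uniq[OF cat po2])
    show "hom C (Cod C i') (Cod C i') (Comp C k h)" using comp_hom[OF cat k(1) h(1)] .
    show "hom C (Cod C i') (Cod C i') (Id C (Cod C i'))" using id_hom[OF cat oi(2)] .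
    show "Comp C i' (Comp C k h) = Comp C i' (Id C (Cod C i'))"
      using assoc[OF cat hi' k(1) h(1)] h k id_r[OF cat hi'] cf by simp
    show "Comp C j' (Comp C k h) = Comp C j' (Id C (Cod C i'))"
      using assoc[OF cat hj' k(1) h(1)] h k id_r[OF cat hj'] by simp
  qed
  have "iso C h" using iso_intro[OF h(1) k(1) hk kh] .
  hence hM: "h \<in> M" using fs unfolding factorisation_system_def subcat_with_isos_def by blast
  have "corel_step C M (i, j) (i', j')"
    using hM h hi hj unfolding corel_step_def hom_def by auto
  thus ?thesis by (rule corel_eq_step)
qed

lemma part2:
  assumes cat: "category C" and subA: "subcat_with_isos C A"
    and hyp0: "\<forall>f g p q i j u.
       f \<in> A \<longrightarrow> g \<in> A \<longrightarrow> Cod C f = Cod C g \<longrightarrow>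
       is_pullback C f g p q \<longrightarrow> is_pushout C p q i j \<longrightarrow>
       hom C (Cod C i) (Cod C f) u \<longrightarrow> Comp C i u = f \<longrightarrow> Comp C j u = g \<longrightarrow> u \<in> M"
    and X: "X \<in> Obj C" and P: "is_pushout C (Id C X) (Id C X) i j"
  shows "corel_eq C M (i, j) (Id C X, Id C X)"
proof -
  note hyp = hyp0[rule_format]
  have hI: "hom C X X (Id C X)" using id_hom[OF cat X] .
  have cI: "Cod C (Id C X) = X" "Dom C (Id C X) = X" using hI by (simp_all add: hom_def)
  note D = po_D[OF P]
  have hi: "hom C X (Cod C i) i" and hj: "hom C X (Cod C i) j" using D cI by auto
  obtain h where h: "hom C (Cod C i) X h" "Comp C i h = Id C X" "Comp C j h = Id C X"
    using po_ex[OF P, of X "Id C X" "Id C X"] cI hI by auto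
  have IA: "Id C X \<in> A"
  proof -
    have "Comp C (Id C X) (Id C X) = Id C X" using id_l[OF cat hI] .
    hence "iso C (Id C X)" using iso_intro[OF hI hI] by blast
    thus ?thesis using subA unfolding subcat_with_isos_def by blast
  qed
  have pbI: "is_pullback C (Id C X) (Id C X) (Id C X) (Id C X)"
    unfolding is_pullback_def
  proof (intro conjI allI impI)
    fix p' q' assume a: "hom C (Dom C p') (Dom C (Id C X)) p' \<and> hom C (Dom C p') (Dom C (Id C X)) q' \<and>
        Comp C p' (Id C X) = Comp C q' (Id C X)"
    have hp: "hom C (Dom C p') X p'" "hom C (Dom C p') X q'" using a cI by auto
    have pq: "p' = q'" using a id_r[OF cat hp(1)] id_r[OF cat hp(2)] by simp
    show "\<exists>!h. hom C (Dom C p') (Dom C (Id C X)) h \<and> Comp C h (Id C X) = p' \<and> Comp C h (Id C X) = q'"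
    proof (rule ex1I[of _ p'])
      show "hom C (Dom C p') (Dom C (Id C X)) p' \<and> Comp C p' (Id C X) = p' \<and> Comp C p' (Id C X) = q'"
        using hp pq cI id_r[OF cat hp(1)] by simp
      fix h assume "hom C (Dom C p') (Dom C (Id C X)) h \<and> Comp C h (Id C X) = p' \<and> Comp C h (Id C X) = q'"
      thus "h = p'" using id_r[OF cat, of "Dom C p'" X h] cI by auto
    qed
  next
    show "Id C X \<in> Arr C" using hI unfolding hom_def by blast
  next
    show "Id C X \<in> Arr C" using hI unfolding hom_def by blast
  next
    show "Cod C (Id C X) = Cod C (Id C X)" by (rule refl)
  next
    show "hom C (Dom C (Id C X)) (Dom C (Id C X)) (Id C X)" using hI cI by simp
  next
    show "hom C (Dom C (Id C X)) (Dom C (Id C X)) (Id C X)" using hI cI by simp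
  next
    show "Comp C (Id C X) (Id C X) = Comp C (Id C X) (Id C X)" by (rule refl)
  qed
  have hM: "h \<in> M" using hyp[OF IA IA refl pbI P] h cI by simp
  have "corel_step C M (i, j) (Id C X, Id C X)"
    using hM h hi hj cI unfolding corel_step_def hom_def by auto
  thus ?thesis by (rule corel_eq_step)
qed

lemma part3:
  assumes cat: "category C" and po: "has_pushouts C" and cost: "costable C M"
    and hyp0: "\<forall>f g p q i j u.
       f \<in> A \<longrightarrow> g \<in> A \<longrightarrow> Cod C f = Cod C g \<longrightarrow>
       is_pullback C f g p q \<longrightarrow> is_pushout C p q i j \<longrightarrow>
       hom C (Cod C i) (Cod C f) u \<longrightarrow> Comp C i u = f \<longrightarrow> Comp C j u = g \<longrightarrow> u \<in> M"
    and sfg: "span_in C A f g" and shk: "span_in C A h k" and cgh: "Cod C g = Cod C h"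
    and pb1: "is_pullback C g h p q"
    and po1: "is_pushout C f g i j" and po2: "is_pushout C h k i' j'"
    and po3: "is_pushout C j i' a b"
    and po4: "is_pushout C (Comp C p f) (Comp C q k) r s"
  shows "corel_eq C M (r, s) (Comp C i a, Comp C j' b)"
proof -
  note hyp = hyp0[rule_format]
  define N where "N = Dom C f"
  define X where "X = Cod C f"
  define Y where "Y = Cod C g"
  define N' where "N' = Dom C h"
  define Z where "Z = Cod C k"
  define P where "P = Dom C p"
  define Q1 where "Q1 = Cod C i"
  define Q2 where "Q2 = Cod C i'"
  define Q where "Q = Cod C a"
  define R where "R = Cod C r"
  note B = pb_D[OF pb1] and D1 = po_D[OF po1] and D2 = po_D[OF po2] and D3 = po_D[OF po3]
    and D4 = po_D[OF po4]
  have hf: "hom C N X f" and hg: "hom C N Y g" and hi: "hom C X Q1 i" and hj: "hom C Y Q1 j"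
    and e1: "Comp C f i = Comp C g j"
    using D1 unfolding N_def X_def Y_def Q1_def by auto
  have hh: "hom C N' Y h" and hk: "hom C N' Z k" and hi': "hom C Y Q2 i'" and hj': "hom C Z Q2 j'"
    and e2: "Comp C h i' = Comp C k j'"
    using D2 cgh unfolding N'_def Z_def Y_def Q2_def by auto
  have hp: "hom C P N p" and hq: "hom C P N' q" and e0: "Comp C p g = Comp C q h"
    using B sfg unfolding span_in_def P_def N_def N'_def by auto
  have cj: "Cod C j = Q1" "Cod C i' = Q2" using hj hi' by (simp_all add: hom_def)
  have ha: "hom C Q1 Q a" and hb: "hom C Q2 Q b" and e3: "Comp C j a = Comp C i' b"
    using D3 cj unfolding Q_def by auto
  have hpf: "hom C P X (Comp C p f)" using comp_hom[OF cat hp hf] .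
  have hqk: "hom C P Z (Comp C q k)" using comp_hom[OF cat hq hk] .
  have cpf: "Cod C (Comp C p f) = X" "Cod C (Comp C q k) = Z" using hpf hqk by (simp_all add: hom_def)
  have hr: "hom C X R r" and hs: "hom C Z R s" and e4: "Comp C (Comp C p f) r = Comp C (Comp C q k) s"
    using D4 cpf unfolding R_def by auto
  have hia: "hom C X Q (Comp C i a)" using comp_hom[OF cat hi ha] .
  have hjb: "hom C Z Q (Comp C j' b)" using comp_hom[OF cat hj' hb] .
  define y where "y = Comp C j a"
  have hy: "hom C Y Q y" unfolding y_def using comp_hom[OF cat hj ha] .
  have ey: "Comp C i' b = y" using e3 y_def by simp
  have "p \<in> Arr C" "q \<in> Arr C" "Dom C p = Dom C q" using hp hq by (simp_all add: hom_def)
  then obtain c d where pw: "is_pushout C p q c d" using po unfolding has_pushouts_def by blast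
  define W where "W = Cod C c"
  note DW = po_D[OF pw]
  have cpN: "Cod C p = N" "Cod C q = N'" using hp hq by (simp_all add: hom_def)
  have hc: "hom C N W c" and hd: "hom C N' W d" and ew: "Comp C p c = Comp C q d"
    using DW cpN unfolding W_def by auto
  obtain u where hu: "hom C W Y u" and u1: "Comp C c u = g" and u2: "Comp C d u = h"
    using po_ex[OF pw, of Y g h] cpN hg hh e0 unfolding W_def by auto
  have uM: "u \<in> M"
    using hyp[of g h p q c d u] sfg shk cgh pb1 pw hu u1 u2
    unfolding span_in_def W_def Y_def by auto
  have eT: "Comp C p (Comp C f r) = Comp C q (Comp C k s)"
    using e4 assoc[OF cat hp hf hr] assoc[OF cat hq hk hs] by simp
  obtain t where ht: "hom C W R t" and t1: "Comp C c t = Comp C f r" and t2: "Comp C d t = Comp C k s"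
    using po_ex[OF pw, of R "Comp C f r" "Comp C k s"] cpN comp_hom[OF cat hf hr]
      comp_hom[OF cat hk hs] eT unfolding W_def by auto
  have eM: "Comp C (Comp C p f) (Comp C i a) = Comp C (Comp C q k) (Comp C j' b)"
  proof -
    have "Comp C (Comp C p f) (Comp C i a) = Comp C p (Comp C f (Comp C i a))"
      using assoc[OF cat hp hf hia] .
    also have "Comp C f (Comp C i a) = Comp C g y"
      using assoc[OF cat hf hi ha] assoc[OF cat hg hj ha] e1 y_def by simp
    also have "Comp C p (Comp C g y) = Comp C q (Comp C h y)"
      using assoc[OF cat hp hg hy] assoc[OF cat hq hh hy] e0 by simp
    also have "Comp C h y = Comp C k (Comp C j' b)"
      using assoc[OF cat hh hi' hb] assoc[OF cat hk hj' hb] e2 ey by simp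
    also have "Comp C q (Comp C k (Comp C j' b)) = Comp C (Comp C q k) (Comp C j' b)"
      using assoc[OF cat hq hk hjb] by simp
    finally show ?thesis .
  qed
  obtain m where hm: "hom C R Q m" and m1: "Comp C r m = Comp C i a" and m2: "Comp C s m = Comp C j' b"
    using po_ex[OF po4, of Q "Comp C i a" "Comp C j' b"] cpf hia hjb eM unfolding R_def by auto
  have htm: "Comp C t m = Comp C u y"
  proof (rule po_uniq[OF cat pw])
    show "hom C (Cod C c) Q (Comp C t m)" using comp_hom[OF cat ht hm] W_def by simp
    show "hom C (Cod C c) Q (Comp C u y)" using comp_hom[OF cat hu hy] W_def by simp
    have "Comp C c (Comp C t m) = Comp C f (Comp C r m)"
      using assoc[OF cat hc ht hm] assoc[OF cat hf hr hm] t1 by simp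
    also have "\<dots> = Comp C g y" using m1 assoc[OF cat hf hi ha] assoc[OF cat hg hj ha] e1 y_def by simp
    also have "\<dots> = Comp C c (Comp C u y)" using assoc[OF cat hc hu hy] u1 by simp
    finally show "Comp C c (Comp C t m) = Comp C c (Comp C u y)" .
    have "Comp C d (Comp C t m) = Comp C k (Comp C s m)"
      using assoc[OF cat hd ht hm] assoc[OF cat hk hs hm] t2 by simp
    also have "\<dots> = Comp C h y" using m2 assoc[OF cat hh hi' hb] assoc[OF cat hk hj' hb] e2 ey by simp
    also have "\<dots> = Comp C d (Comp C u y)" using assoc[OF cat hd hu hy] u2 by simp
    finally show "Comp C d (Comp C t m) = Comp C d (Comp C u y)" .
  qed
  have ctu: "Cod C t = R" "Cod C u = Y" "Cod C m = Q" "Dom C t = W" "Dom C u = W"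
    using ht hu hm by (simp_all add: hom_def)
  have square: "is_pushout C t u m y"
  proof (rule po_intro)
    show "t \<in> Arr C" "u \<in> Arr C" "Dom C t = Dom C u" using ht hu ctu by (simp_all add: hom_def)
    show "hom C (Cod C t) (Cod C m) m" "hom C (Cod C u) (Cod C m) y" using hm hy ctu by simp_all
    show "Comp C t m = Comp C u y" by (rule htm)
    fix x z T assume hx0: "hom C (Cod C t) T x" and hz0: "hom C (Cod C u) T z"
      and ex: "Comp C t x = Comp C u z"
    have hx: "hom C R T x" and hz: "hom C Y T z" using hx0 hz0 ctu by simp_all
    have hrx: "hom C X T (Comp C r x)" using comp_hom[OF cat hr hx] .
    have hsx: "hom C Z T (Comp C s x)" using comp_hom[OF cat hs hx] .
    have en1: "Comp C f (Comp C r x) = Comp C g z"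
    proof -
      have "Comp C f (Comp C r x) = Comp C c (Comp C t x)"
        using assoc[OF cat hf hr hx] assoc[OF cat hc ht hx] t1 by simp
      also have "\<dots> = Comp C g z" using ex assoc[OF cat hc hu hz] u1 by simp
      finally show ?thesis .
    qed
    obtain n1 where hn1: "hom C Q1 T n1" and n11: "Comp C i n1 = Comp C r x" and n12: "Comp C j n1 = z"
      using po_ex[OF po1, of T "Comp C r x" z] hrx hz en1 unfolding X_def Y_def Q1_def by auto
    have en2: "Comp C h z = Comp C k (Comp C s x)"
    proof -
      have "Comp C h z = Comp C d (Comp C t x)"
        using assoc[OF cat hd hu hz] u2 ex by simp
      also have "\<dots> = Comp C k (Comp C s x)"
        using assoc[OF cat hd ht hx] assoc[OF cat hk hs hx] t2 by simp
      finally show ?thesis .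
    qed
    have cY: "Cod C h = Y" using hh by (simp_all add: hom_def)
    obtain n2 where hn2: "hom C Q2 T n2" and n21: "Comp C i' n2 = z" and n22: "Comp C j' n2 = Comp C s x"
      using po_ex[OF po2, of T z "Comp C s x"] hz hsx en2 cY unfolding Z_def Q2_def by auto
    obtain n where hn: "hom C Q T n" and na: "Comp C a n = n1" and nb: "Comp C b n = n2"
      using po_ex[OF po3, of T n1 n2] hn1 hn2 n12 n21 cj unfolding Q_def by auto
    show "\<exists>!n. hom C (Cod C m) T n \<and> Comp C m n = x \<and> Comp C y n = z"
    proof (rule ex1I[of _ n])
      have mn: "Comp C m n = x"
      proof (rule po_uniq[OF cat po4])
        show "hom C (Cod C r) T (Comp C m n)" using comp_hom[OF cat hm hn] R_def by simp
        show "hom C (Cod C r) T x" using hx R_def by simp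
        show "Comp C r (Comp C m n) = Comp C r x"
          using assoc[OF cat hr hm hn] m1 assoc[OF cat hi ha hn] na n11 by simp
        show "Comp C s (Comp C m n) = Comp C s x"
          using assoc[OF cat hs hm hn] m2 assoc[OF cat hj' hb hn] nb n22 by simp
      qed
      have yn: "Comp C y n = z" using y_def assoc[OF cat hj ha hn] na n12 by simp
      show "hom C (Cod C m) T n \<and> Comp C m n = x \<and> Comp C y n = z" using hn ctu mn yn by simp
      fix n' assume a: "hom C (Cod C m) T n' \<and> Comp C m n' = x \<and> Comp C y n' = z"
      have hn': "hom C Q T n'" using a ctu by simp
      have an: "Comp C a n' = n1"
      proof (rule po_uniq[OF cat po1])
        show "hom C (Cod C i) T (Comp C a n')" using comp_hom[OF cat ha hn'] Q1_def by simp
        show "hom C (Cod C i) T n1" using hn1 Q1_def by simp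
        show "Comp C i (Comp C a n') = Comp C i n1"
          using assoc[OF cat hi ha hn'] m1[symmetric] assoc[OF cat hr hm hn'] a n11 by simp
        show "Comp C j (Comp C a n') = Comp C j n1"
          using assoc[OF cat hj ha hn'] y_def a n12 by simp
      qed
      have bn: "Comp C b n' = n2"
      proof (rule po_uniq[OF cat po2])
        show "hom C (Cod C i') T (Comp C b n')" using comp_hom[OF cat hb hn'] Q2_def by simp
        show "hom C (Cod C i') T n2" using hn2 Q2_def by simp
        show "Comp C i' (Comp C b n') = Comp C i' n2"
          using assoc[OF cat hi' hb hn'] ey a n21 by simp
        show "Comp C j' (Comp C b n') = Comp C j' n2"
          using assoc[OF cat hj' hb hn'] m2[symmetric] assoc[OF cat hs hm hn'] a n22 by simp
      qed
      show "n' = n"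
      proof (rule po_uniq[OF cat po3])
        show "hom C (Cod C a) T n'" using hn' Q_def by simp
        show "hom C (Cod C a) T n" using hn Q_def by simp
        show "Comp C a n' = Comp C a n" using an na by simp
        show "Comp C b n' = Comp C b n" using bn nb by simp
      qed
    qed
  qed
  have mM: "m \<in> M" using cost square uM unfolding costable_def by blast
  have "corel_step C M (r, s) (Comp C i a, Comp C j' b)"
    using mM hm hr hs m1 m2 hia unfolding corel_step_def hom_def by auto
  thus ?thesis by (rule corel_eq_step)
qed

theorem proposition2p9:
  fixes C :: "('o, 'a) cat" and E M A :: "'a set"
  assumes cat: "category C"
    and po: "has_pushouts C" and pb: "has_pullbacks C"
    and fs: "factorisation_system C E M" and cost: "costable C M"
    and subA: "subcat_with_isos C A" and stabA: "pullback_stable C A"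
    and hyp: "\<And>f g p q i j u.
       f \<in> A \<Longrightarrow> g \<in> A \<Longrightarrow> Cod C f = Cod C g \<Longrightarrow>
       is_pullback C f g p q \<Longrightarrow> is_pushout C p q i j \<Longrightarrow>
       hom C (Cod C i) (Cod C f) u \<Longrightarrow> Comp C i u = f \<Longrightarrow> Comp C j u = g \<Longrightarrow> u \<in> M"
  shows
    \<comment> \<open>well-defined on isomorphism classes of spans (independent of representative
        and of the chosen pushout)\<close>
    "(\<forall>f g f' g' i j i' j'.
        span_in C A f g \<and> span_in C A f' g' \<and> span_iso C (f, g) (f', g') \<and>
        is_pushout C f g i j \<and> is_pushout C f' g' i' j' \<longrightarrow>
        corel_eq C M (i, j) (i', j'))
     \<and>
     \<comment> \<open>preserves identities\<close>
     (\<forall>X \<in> Obj C. \<forall>i j. is_pushout C (Id C X) (Id C X) i j \<longrightarrow>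
        corel_eq C M (i, j) (Id C X, Id C X))
     \<and>
     \<comment> \<open>preserves composition: span composite by pullback, corelation composite by pushout\<close>
     (\<forall>f g h k p q i j i' j' a b r s.
        span_in C A f g \<and> span_in C A h k \<and> Cod C g = Cod C h \<and>
        is_pullback C g h p q \<and>
        is_pushout C f g i j \<and> is_pushout C h k i' j' \<and>
        is_pushout C j i' a b \<and>
        is_pushout C (Comp C p f) (Comp C q k) r s \<longrightarrow>
        corel_eq C M (r, s) (Comp C i a, Comp C j' b))"
proof -
  have hyp0: "\<forall>f g p q i j u.
       f \<in> A \<longrightarrow> g \<in> A \<longrightarrow> Cod C f = Cod C g \<longrightarrow>
       is_pullback C f g p q \<longrightarrow> is_pushout C p q i j \<longrightarrow>
       hom C (Cod C i) (Cod C f) u \<longrightarrow> Comp C i u = f \<longrightarrow> Comp C j u = g \<longrightarrow> u \<in> M"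
    using hyp by blast
  show ?thesis
proof (intro conjI allI impI ballI)
  fix f g f' g' i j i' j'
  assume "span_in C A f g \<and> span_in C A f' g' \<and> span_iso C (f, g) (f', g') \<and>
        is_pushout C f g i j \<and> is_pushout C f' g' i' j'"
  thus "corel_eq C M (i, j) (i', j')" using part1[OF cat fs] by blast
next
  fix X i j assume "X \<in> Obj C" "is_pushout C (Id C X) (Id C X) i j"
  thus "corel_eq C M (i, j) (Id C X, Id C X)" using part2[of C A M X i j, OF cat subA hyp0] by blast
next
  fix f g h k p q i j i' j' a b r s
  assume "span_in C A f g \<and> span_in C A h k \<and> Cod C g = Cod C h \<and>
        is_pullback C g h p q \<and>
        is_pushout C f g i j \<and> is_pushout C h k i' j' \<and>
        is_pushout C j i' a b \<and>
        is_pushout C (Comp C p f) (Comp C q k) r s"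
  thus "corel_eq C M (r, s) (Comp C i a, Comp C j' b)" using part3[of C M A f g h k p q i j i' j' a b r s, OF cat po cost hyp0] by blast
qed
qed

end
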